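(* Let $n \geq 3$, let $C_n$ be the cycle on $n$ vertices, and let $G$ be a $k$-fold cover of $C_n$. Then $\gamma(G) \geq \frac{2}{3}\,k\,\gamma(C_n)$.
   Context: All graphs are finite, simple and undirected. A graph $G$ is a cover of a graph $F$ if there is an onto map $\pi: V(G)\to V(F)$ such that for every vertex $v$ of $G$, $\pi$ maps the neighbours of $v$ in $G$ bijectively onto the neighbours of $\pi(v)$ in $F$; the cover is $k$-fold if every fibre $\pi^{-1}(u)$ has exactly $k$ vertices. $\gamma(\cdot)$ denotes the domination number: the minimum size of a set $S$ of vertices such that every vertex not in $S$ has a neighbour in $S$. *)

theory Defs
  imports Complex_Main
begin

definition simple_graph :: "'a set \<Rightarrow> ('a \<Rightarrow> 'a \<Rightarrow> bool) \<Rightarrow> bool" where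
  "simple_graph V E \<longleftrightarrow> finite V \<and> (\<forall>u v. E u v \<longrightarrow> u \<in> V \<and> v \<in> V)
     \<and> (\<forall>u v. E u v \<longrightarrow> E v u) \<and> (\<forall>v. \<not> E v v)"

definition nbhd :: "'a set \<Rightarrow> ('a \<Rightarrow> 'a \<Rightarrow> bool) \<Rightarrow> 'a \<Rightarrow> 'a set" where
  "nbhd V E v = {u \<in> V. E v u}"

definition dominating_set :: "'a set \<Rightarrow> ('a \<Rightarrow> 'a \<Rightarrow> bool) \<Rightarrow> 'a set \<Rightarrow> bool" where
  "dominating_set V E S \<longleftrightarrow> S \<subseteq> V \<and> (\<forall>v \<in> V - S. \<exists>u \<in> S. E v u)"

definition domination_number :: "'a set \<Rightarrow> ('a \<Rightarrow> 'a \<Rightarrow> bool) \<Rightarrow> nat" where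
  "domination_number V E = Min {card S | S. dominating_set V E S}"

definition cycle_adj :: "nat \<Rightarrow> nat \<Rightarrow> nat \<Rightarrow> bool" where
  "cycle_adj n i j \<longleftrightarrow> i < n \<and> j < n \<and> (j = (i + 1) mod n \<or> i = (j + 1) mod n) \<and> i \<noteq> j"

definition is_cover :: "'a set \<Rightarrow> ('a \<Rightarrow> 'a \<Rightarrow> bool) \<Rightarrow> 'b set \<Rightarrow> ('b \<Rightarrow> 'b \<Rightarrow> bool)
    \<Rightarrow> ('a \<Rightarrow> 'b) \<Rightarrow> bool" where
  "is_cover V E W F \<pi> \<longleftrightarrow> \<pi> ` V = W \<and>
     (\<forall>v \<in> V. bij_betw \<pi> (nbhd V E v) (nbhd W F (\<pi> v)))"

definition is_k_fold_cover :: "nat \<Rightarrow> 'a set \<Rightarrow> ('a \<Rightarrow> 'a \<Rightarrow> bool) \<Rightarrow> 'b set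
    \<Rightarrow> ('b \<Rightarrow> 'b \<Rightarrow> bool) \<Rightarrow> ('a \<Rightarrow> 'b) \<Rightarrow> bool" where
  "is_k_fold_cover k V E W F \<pi> \<longleftrightarrow> is_cover V E W F \<pi> \<and>
     (\<forall>u \<in> W. card {v \<in> V. \<pi> v = u} = k)"

end

theory Submission
  imports Defs
begin

lemma cyc_nbhd_sub:
  assumes "n \<ge> 3" "i < n"
  shows "nbhd {0..<n} (cycle_adj n) i \<subseteq> {(i+1) mod n, (i+n-1) mod n}"
proof
  fix j assume "j \<in> nbhd {0..<n} (cycle_adj n) i"
  hence j: "j < n" "j = (i + 1) mod n \<or> i = (j + 1) mod n"
    by (auto simp: nbhd_def cycle_adj_def)
  show "j \<in> {(i+1) mod n, (i+n-1) mod n}"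
  proof (cases "j = (i + 1) mod n")
    case False
    hence ij: "i = (j + 1) mod n" using j by auto
    show ?thesis
    proof (cases "j + 1 < n")
      case True
      hence "i = j + 1" using ij by simp
      hence "(i+n-1) mod n = j" using j by simp
      thus ?thesis by simp
    next
      case False
      hence "j = n - 1" using j by simp
      hence "i = 0" using ij assms by simp
      thus ?thesis using \<open>j = n - 1\<close> assms by simp
    qed
  qed simp
qed

lemma cyc_nbhd_card:
  assumes "n \<ge> 3" "i < n"
  shows "card (nbhd {0..<n} (cycle_adj n) i) \<le> 2"
proof -
  have "card (nbhd {0..<n} (cycle_adj n) i) \<le> card {(i+1) mod n, (i+n-1) mod n}"
    by (rule card_mono) (use cyc_nbhd_sub[OF assms] in auto)
  also have "\<dots> \<le> 2" by (simp add: card_insert_le_m1)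
  finally show ?thesis .
qed

lemma cyc_dom:
  assumes "n \<ge> 3"
  shows "dominating_set {0..<n} (cycle_adj n) {i. i < n \<and> i mod 3 = 0}"
  unfolding dominating_set_def
proof (intro conjI ballI)
  fix v assume v: "v \<in> {0..<n} - {i. i < n \<and> i mod 3 = 0}"
  hence vn: "v < n" and vm: "v mod 3 \<noteq> 0" by auto
  show "\<exists>u\<in>{i. i < n \<and> i mod 3 = 0}. cycle_adj n v u"
  proof (cases "v mod 3 = 1")
    case True
    hence "v \<ge> 1" by (cases v) auto
    hence "v - 1 \<in> {i. i < n \<and> i mod 3 = 0}" "cycle_adj n v (v - 1)"
      using True vn unfolding cycle_adj_def by (auto, presburger)
    thus ?thesis by (intro bexI[where x="v - 1"]) auto
  next
    case False
    hence v2: "v mod 3 = 2" using vm by presburger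
    show ?thesis
    proof (cases "v + 1 < n")
      case True
      hence "v + 1 \<in> {i. i < n \<and> i mod 3 = 0}" "cycle_adj n v (v + 1)"
        using v2 vn unfolding cycle_adj_def by (auto, presburger)
      thus ?thesis by (intro bexI[where x="v + 1"]) auto
    next
      case False
      hence "v + 1 = n" using vn by simp
      hence "0 \<in> {i. i < n \<and> i mod 3 = 0}" "cycle_adj n v 0"
        using v2 vn assms unfolding cycle_adj_def by auto
      thus ?thesis by (intro bexI[where x="0"]) auto
    qed
  qed
qed auto

lemma card_mult3:
  "card {i::nat. i < n \<and> i mod 3 = 0} = (n + 2) div 3"
proof -
  have "{i::nat. i < n \<and> i mod 3 = 0} = (\<lambda>j. 3 * j) ` {..<(n+2) div 3}"
  proof (rule set_eqI, rule iffI)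
    fix x assume "x \<in> {i::nat. i < n \<and> i mod 3 = 0}"
    hence "x = 3 * (x div 3)" "x div 3 < (n+2) div 3" by auto
    thus "x \<in> (\<lambda>j. 3 * j) ` {..<(n+2) div 3}" by blast
  next
    fix x assume "x \<in> (\<lambda>j. 3 * j) ` {..<(n+2) div 3}"
    then obtain j where "x = 3 * j" "j < (n+2) div 3" by auto
    thus "x \<in> {i::nat. i < n \<and> i mod 3 = 0}" by simp
  qed
  moreover have "inj_on (\<lambda>j::nat. 3 * j) {..<(n+2) div 3}" by (auto simp: inj_on_def)
  ultimately show ?thesis by (simp add: card_image)
qed

theorem corollary2p5:
  fixes n k :: nat and V :: "'a set" and E :: "'a \<Rightarrow> 'a \<Rightarrow> bool" and \<pi> :: "'a \<Rightarrow> nat"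
  assumes "n \<ge> 3"
    and "simple_graph V E"
    and "is_k_fold_cover k V E {0..<n} (cycle_adj n) \<pi>"
  shows "real (domination_number V E)
           \<ge> 2 / 3 * real k * real (domination_number {0..<n} (cycle_adj n))"
proof -
  have fin: "finite V" and sym: "\<And>u v. E u v \<Longrightarrow> E v u"
    using assms(2) by (auto simp: simple_graph_def)
  have img: "\<pi> ` V = {0..<n}" and bij: "\<And>v. v \<in> V \<Longrightarrow> bij_betw \<pi> (nbhd V E v) (nbhd {0..<n} (cycle_adj n) (\<pi> v))"
    and fib: "\<And>u. u < n \<Longrightarrow> card {v \<in> V. \<pi> v = u} = k"
    using assms(3) by (auto simp: is_k_fold_cover_def is_cover_def)
  have Vu: "V = (\<Union>u\<in>{0..<n}. {v \<in> V. \<pi> v = u})" using img by auto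
  have cardV: "card V = n * k"
  proof -
    have "card V = (\<Sum>u\<in>{0..<n}. card {v \<in> V. \<pi> v = u})"
      by (subst Vu, rule card_UN_disjoint) (use fin in auto)
    also have "\<dots> = n * k" using fib by simp
    finally show ?thesis .
  qed
  define d where "d = domination_number V E"
  have domV: "dominating_set V E V" by (simp add: dominating_set_def)
  have finC: "finite {card S | S. dominating_set V E S}"
  proof (rule finite_subset)
    show "{card S | S. dominating_set V E S} \<subseteq> {..card V}"
      using fin by (auto simp: dominating_set_def intro: card_mono)
  qed simp
  have "d \<in> {card S | S. dominating_set V E S}"
    unfolding d_def domination_number_def by (rule Min_in[OF finC]) (use domV in blast)
  then obtain S where S: "dominating_set V E S" "card S = d" by blast
  have SV: "S \<subseteq> V" using S by (simp add: dominating_set_def)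
  have finS: "finite S" using SV fin finite_subset by blast
  have cover: "V \<subseteq> S \<union> (\<Union>s\<in>S. nbhd V E s)"
  proof
    fix v assume "v \<in> V"
    show "v \<in> S \<union> (\<Union>s\<in>S. nbhd V E s)"
    proof (cases "v \<in> S")
      case False
      then obtain u where "u \<in> S" "E v u" using S(1) \<open>v \<in> V\<close> by (auto simp: dominating_set_def)
      thus ?thesis using sym \<open>v \<in> V\<close> by (auto simp: nbhd_def)
    qed simp
  qed
  have nb2: "\<And>s. s \<in> S \<Longrightarrow> card (nbhd V E s) \<le> 2"
  proof -
    fix s assume "s \<in> S"
    hence sV: "s \<in> V" using SV by auto
    hence "\<pi> s < n" using img by auto
    have "card (nbhd V E s) = card (nbhd {0..<n} (cycle_adj n) (\<pi> s))"
      using bij[OF sV] by (rule bij_betw_same_card)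
    thus "card (nbhd V E s) \<le> 2" using cyc_nbhd_card[OF assms(1) \<open>\<pi> s < n\<close>] by simp
  qed
  have "card V \<le> card (S \<union> (\<Union>s\<in>S. nbhd V E s))"
    by (rule card_mono[OF _ cover]) (use finS fin in \<open>auto simp: nbhd_def\<close>)
  also have "\<dots> \<le> card S + card (\<Union>s\<in>S. nbhd V E s)" by (rule card_Un_le)
  also have "\<dots> \<le> card S + (\<Sum>s\<in>S. card (nbhd V E s))" using card_UN_le[OF finS] by simp
  also have "\<dots> \<le> card S + (\<Sum>s\<in>S. 2)" using nb2 by (intro add_left_mono sum_mono) auto
  finally have low: "n * k \<le> 3 * d" using cardV S(2) by simp
  define D where "D = domination_number {0..<n} (cycle_adj n)"
  have finC2: "finite {card S | S. dominating_set {0..<n} (cycle_adj n) S}"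
  proof (rule finite_subset)
    show "{card S | S. dominating_set {0..<n} (cycle_adj n) S} \<subseteq> {..card {0..<n}}"
      by (auto simp: dominating_set_def dest: subset_eq_atLeast0_lessThan_card)
  qed simp
  have "D \<le> card {i. i < n \<and> i mod 3 = 0}"
    unfolding D_def domination_number_def by (rule Min_le[OF finC2]) (use cyc_dom[OF assms(1)] in blast)
  hence "D \<le> (n + 2) div 3" by (simp add: card_mult3)
  hence "2 * D \<le> n" using assms(1) by linarith
  hence "2 * D * k \<le> n * k" by simp
  hence "2 * D * k \<le> 3 * d" using low by linarith
  hence "real (2 * D * k) \<le> real (3 * d)" by linarith
  hence "2 * real D * real k \<le> 3 * real d" by simp
  thus ?thesis unfolding d_def[symmetric] D_def[symmetric] by (simp add: mult.commute mult.left_commute)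
qed

end
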